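(* Let $n\ge p\ge1$, $\lambda>0$, $0<\varepsilon<\frac34$, and let $f:\mathbb{R}^{n\times p}\to\mathbb{R}$ be twice continuously differentiable. Let $\mathrm{St}(p,n)^\varepsilon=\{X:\|X^\top X-I_p\|\le\varepsilon\}$, let $L>0$ be such that $\nabla f$ is $L$-Lipschitz on $\mathrm{St}(p,n)^\varepsilon$, $L'=\max_{X\in\mathrm{St}(p,n)^\varepsilon}\|\nabla f(X)\|$, $\hat L=\max(L,L')$, $s=\sup_{X\in\mathrm{St}(p,n)^\varepsilon}\|\mathrm{sym}(X^\top\nabla f(X))\|$, let $\mu\ge\frac{2}{3-4\varepsilon}\left(L(1-\varepsilon)+3s+\hat L^2\frac{(1+\varepsilon)^2}{\lambda(1-\varepsilon)}\right)$, $\nu=\lambda\mu$, and $\mathcal{L}(X)=f(X)-\frac12\langle\mathrm{sym}(X^\top\nabla f(X)),X^\top X-I_p\rangle+\mu\mathcal{N}(X)$. Let $\rho=\min\left(\frac12,\frac{\nu}{4\lambda^2(1+\varepsilon)}\right)$. Then for all $X\in\mathrm{St}(p,n)^\varepsilon$, $$\langle\Lambda(X),\nabla\mathcal{L}(X)\rangle\ge\rho\|\Lambda(X)\|^2.$$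
   Context: $\|\cdot\|$ and $\langle\cdot,\cdot\rangle$ are the Frobenius norm and inner product. $\mathrm{sym}(M)=\frac12(M+M^\top)$, $\mathrm{skew}(M)=\frac12(M-M^\top)$. $\mathcal{N}(X)=\frac14\|X^\top X-I_p\|^2$. $\mathrm{grad}f(X)=\mathrm{skew}(\nabla f(X)X^\top)X$ for all $X$, and $\Lambda(X)=\mathrm{grad}f(X)+\lambda X(X^\top X-I_p)$. *)

theory Defs
  imports "HOL-Analysis.Analysis"
begin

text \<open>Matrices in R^(n x p) are represented as real^'p^'n (rows indexed by 'n).
  The inner product and norm on this type are the Frobenius ones.\<close>

definition msym :: "real^'k^'k \<Rightarrow> real^'k^'k" where
  "msym M = (1/2) *\<^sub>R (M + transpose M)"

definition mskew :: "real^'k^'k \<Rightarrow> real^'k^'k" where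
  "mskew M = (1/2) *\<^sub>R (M - transpose M)"

definition Nfun :: "real^'p^'n \<Rightarrow> real" where
  "Nfun X = (1/4) * (norm (transpose X ** X - mat 1))\<^sup>2"

definition stiefel_eps :: "real \<Rightarrow> (real^'p^'n) set" where
  "stiefel_eps eps = {X. norm (transpose X ** X - mat 1) \<le> eps}"

definition rgrad :: "(real^'p^'n \<Rightarrow> real^'p^'n) \<Rightarrow> real^'p^'n \<Rightarrow> real^'p^'n" where
  "rgrad gradf X = mskew (gradf X ** transpose X) ** X"

definition Lambda :: "(real^'p^'n \<Rightarrow> real^'p^'n) \<Rightarrow> real \<Rightarrow> real^'p^'n \<Rightarrow> real^'p^'n" where
  "Lambda gradf lam X = rgrad gradf X + lam *\<^sub>R (X ** (transpose X ** X - mat 1))"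

definition meritL :: "(real^'p^'n \<Rightarrow> real) \<Rightarrow> (real^'p^'n \<Rightarrow> real^'p^'n) \<Rightarrow> real \<Rightarrow> real^'p^'n \<Rightarrow> real" where
  "meritL f gradf mu X = f X - (1/2) * inner (msym (transpose X ** gradf X)) (transpose X ** X - mat 1)
      + mu * Nfun X"

end

theory Submission
  imports Defs
begin


lemma inner_mat: "inner (A::real^'m^'n) B = (\<Sum>i\<in>UNIV. \<Sum>j\<in>UNIV. A$i$j * B$i$j)"
  by (simp add: inner_vec_def)

lemma mm_entry: "((A::real^'n^'m) ** (B::real^'p^'n))$i$k = (\<Sum>j\<in>UNIV. A$i$j * B$j$k)"
  by (simp add: matrix_matrix_mult_def)

lemma tr_entry: "(transpose (A::real^'n^'m))$i$j = A$j$i"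
  by (simp add: transpose_def)

lemma inner_mult_left: "inner ((A::real^'n^'m) ** (B::real^'p^'n)) C = inner B (transpose A ** C)"
proof -
  have "inner (A ** B) C = (\<Sum>i\<in>UNIV. \<Sum>k\<in>UNIV. \<Sum>j\<in>UNIV. A$i$j * B$j$k * C$i$k)"
    by (simp only: inner_mat mm_entry sum_distrib_right)
  also have "\<dots> = (\<Sum>i\<in>UNIV. \<Sum>j\<in>UNIV. \<Sum>k\<in>UNIV. A$i$j * B$j$k * C$i$k)"
    by (rule sum.cong[OF refl], rule sum.swap)
  also have "\<dots> = (\<Sum>j\<in>UNIV. \<Sum>i\<in>UNIV. \<Sum>k\<in>UNIV. A$i$j * B$j$k * C$i$k)"
    by (rule sum.swap)
  also have "\<dots> = (\<Sum>j\<in>UNIV. \<Sum>k\<in>UNIV. \<Sum>i\<in>UNIV. A$i$j * B$j$k * C$i$k)"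
    by (rule sum.cong[OF refl], rule sum.swap)
  also have "\<dots> = (\<Sum>j\<in>UNIV. \<Sum>k\<in>UNIV. B$j$k * (\<Sum>i\<in>UNIV. A$i$j * C$i$k))"
    by (simp only: sum_distrib_left mult_ac)
  also have "\<dots> = inner B (transpose A ** C)"
    by (simp only: inner_mat mm_entry tr_entry)
  finally show ?thesis .
qed

lemma inner_transpose: "inner (transpose (A::real^'m^'n)) (transpose B) = inner A B"
  by (simp only: inner_mat tr_entry) (rule sum.swap)

lemma norm_transpose: "norm (transpose (A::real^'m^'n)) = norm A"
  by (simp add: norm_eq_sqrt_inner inner_transpose)

lemma inner_mult_right: "inner ((A::real^'n^'m) ** (B::real^'p^'n)) C = inner A (C ** transpose B)"
proof -
  have "inner (A ** B) C = inner (transpose (A ** B)) (transpose C)" by (simp add: inner_transpose)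
  also have "\<dots> = inner (transpose B ** transpose A) (transpose C)" by (simp add: matrix_transpose_mul)
  also have "\<dots> = inner (transpose A) (B ** transpose C)" by (simp add: inner_mult_left)
  also have "\<dots> = inner (transpose A) (transpose (C ** transpose B))" by (simp add: matrix_transpose_mul)
  also have "\<dots> = inner A (C ** transpose B)" by (simp add: inner_transpose)
  finally show ?thesis .
qed

lemma norm_mat_sq: "(norm (A::real^'m^'n))^2 = (\<Sum>i\<in>UNIV. (norm (A$i))^2)"
  by (simp add: norm_vec_def L2_set_def sum_nonneg)

lemma norm_vec_sq: "(norm (v::real^'m))^2 = (\<Sum>j\<in>UNIV. (v$j)^2)"
  by (simp add: norm_vec_def L2_set_def sum_nonneg)

lemma norm_mat_sq2: "(norm (A::real^'m^'n))^2 = (\<Sum>i\<in>UNIV. \<Sum>j\<in>UNIV. (A$i$j)^2)"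
  by (simp only: norm_mat_sq norm_vec_sq)

lemma sum_col_sq: "(\<Sum>k\<in>UNIV. (norm (column k (B::real^'p^'n)))^2) = (norm B)^2"
proof -
  have "(\<Sum>k\<in>UNIV. (norm (column k B))^2) = (\<Sum>k\<in>UNIV. \<Sum>j\<in>UNIV. (B$j$k)^2)"
    by (simp only: norm_vec_sq) (simp add: column_def)
  also have "\<dots> = (\<Sum>j\<in>UNIV. \<Sum>k\<in>UNIV. (B$j$k)^2)" by (rule sum.swap)
  also have "\<dots> = (norm B)^2" by (simp only: norm_mat_sq2)
  finally show ?thesis .
qed

lemma entry_le: "\<bar>((A::real^'n^'m) ** (B::real^'p^'n))$i$k\<bar> \<le> norm (A$i) * norm (column k B)"
proof -
  have "(A ** B)$i$k = inner (A$i) (column k B)"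
    by (simp add: matrix_matrix_mult_def inner_vec_def column_def)
  thus ?thesis using Cauchy_Schwarz_ineq2 by metis
qed

lemma entry_sq_le: "((A::real^'n^'m) ** (B::real^'p^'n))$i$k ^ 2 \<le> (norm (A$i))^2 * (norm (column k B))^2"
proof -
  have "((A ** B)$i$k)^2 = \<bar>(A ** B)$i$k\<bar>^2" by simp
  also have "\<dots> \<le> (norm (A$i) * norm (column k B))^2"
    by (rule power_mono[OF entry_le]) simp
  finally show ?thesis by (simp add: power_mult_distrib)
qed

lemma norm_mult_sq_le: "(norm ((A::real^'n^'m) ** (B::real^'p^'n)))^2 \<le> (norm A)^2 * (norm B)^2"
proof -
  have "(norm (A ** B))^2 = (\<Sum>i\<in>UNIV. \<Sum>k\<in>UNIV. ((A ** B)$i$k)^2)"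
    by (simp only: norm_mat_sq2)
  also have "\<dots> \<le> (\<Sum>i\<in>UNIV. \<Sum>k\<in>UNIV. (norm (A$i))^2 * (norm (column k B))^2)"
    by (intro sum_mono entry_sq_le)
  also have "\<dots> = (\<Sum>i\<in>UNIV. (norm (A$i))^2) * (\<Sum>k\<in>UNIV. (norm (column k B))^2)"
    by (simp only: sum_product)
  also have "\<dots> = (norm A)^2 * (norm B)^2"
    by (simp only: sum_col_sq[of B] norm_mat_sq[of A])
  finally show ?thesis .
qed

lemma norm_mult_le: "norm ((A::real^'n^'m) ** (B::real^'p^'n)) \<le> norm A * norm B"
proof -
  have h: "(norm (A ** B))^2 \<le> (norm A * norm B)^2"
    unfolding power_mult_distrib by (rule norm_mult_sq_le)
  have z: "0 \<le> norm A * norm B" by simp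
  show ?thesis using power2_le_imp_le[OF h z] .
qed

lemma mm_add_r: "((A::real^'n^'m) + B) ** (C::real^'p^'n) = A ** C + B ** C"
  by (vector matrix_matrix_mult_def sum.distrib[symmetric] field_simps)
lemma mm_scale_l: "((r::real) *\<^sub>R (A::real^'n^'m)) ** (B::real^'p^'n) = r *\<^sub>R (A ** B)"
  by (vector matrix_matrix_mult_def sum_distrib_left field_simps)
lemma mm_scale_r: "(A::real^'n^'m) ** ((r::real) *\<^sub>R (B::real^'p^'n)) = r *\<^sub>R (A ** B)"
  by (vector matrix_matrix_mult_def sum_distrib_left field_simps)
lemma tr_add: "transpose ((A::real^'n^'m) + B) = transpose A + transpose B"
  by (vector transpose_def)
lemma tr_diff: "transpose ((A::real^'n^'m) - B) = transpose A - transpose B"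
  by (vector transpose_def)
lemma tr_minus: "transpose (- (A::real^'n^'m)) = - transpose A"
  by (vector transpose_def)
lemma mm_diff_r: "((A::real^'n^'m) - B) ** (C::real^'p^'n) = A ** C - B ** C"
proof -
  have h: "(A - B) ** C + B ** C = A ** C" using mm_add_r[of "A - B" B C] by simp
  show ?thesis unfolding eq_diff_eq by (rule h)
qed
lemma mm_diff_l: "(A::real^'n^'m) ** ((B::real^'p^'n) - C) = A ** B - A ** C"
proof -
  have h: "A ** (B - C) + A ** C = A ** B" using matrix_add_ldistrib[of A "B - C" C] by simp
  show ?thesis unfolding eq_diff_eq by (rule h)
qed
lemma mm_minus_l: "(- (A::real^'n^'m)) ** (B::real^'p^'n) = - (A ** B)"
  using mm_scale_l[of "-1" A B] by simp
lemma mm_minus_r: "(A::real^'n^'m) ** (- (B::real^'p^'n)) = - (A ** B)"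
  using mm_scale_r[of A "-1" B] by simp

lemma bb_mm: "bounded_bilinear ((**) :: real^'n^'m \<Rightarrow> real^'p^'n \<Rightarrow> real^'p^'m)"
proof (rule bounded_bilinear.intro)
  fix a a' :: "real^'n^'m" and b :: "real^'p^'n"
  show "(a + a') ** b = a ** b + a' ** b" by (rule mm_add_r)
next
  fix a :: "real^'n^'m" and b b' :: "real^'p^'n"
  show "a ** (b + b') = a ** b + a ** b'" by (rule matrix_add_ldistrib)
next
  fix r and a :: "real^'n^'m" and b :: "real^'p^'n"
  show "(r *\<^sub>R a) ** b = r *\<^sub>R (a ** b)" by (rule mm_scale_l)
next
  fix r and a :: "real^'n^'m" and b :: "real^'p^'n"
  show "a ** (r *\<^sub>R b) = r *\<^sub>R (a ** b)" by (rule mm_scale_r)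
next
  have "\<forall>(a::real^'n^'m) (b::real^'p^'n). norm (a ** b) \<le> norm a * norm b * 1"
  proof (intro allI)
    fix a :: "real^'n^'m" and b :: "real^'p^'n"
    show "norm (a ** b) \<le> norm a * norm b * 1" using norm_mult_le[of a b] by simp
  qed
  thus "\<exists>K. \<forall>(a::real^'n^'m) (b::real^'p^'n). norm (a ** b) \<le> norm a * norm b * K" by blast
qed

lemma bl_tr: "bounded_linear (transpose :: real^'n^'m \<Rightarrow> real^'m^'n)"
proof (rule bounded_linear_intro[where K=1])
  fix x y :: "real^'n^'m" show "transpose (x + y) = transpose x + transpose y" by (rule tr_add)
next
  fix r and x :: "real^'n^'m" show "transpose (r *\<^sub>R x) = r *\<^sub>R transpose x" by (rule transpose_scalar)
next
  fix x :: "real^'n^'m" show "norm (transpose x) \<le> norm x * 1" by (simp add: norm_transpose)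
qed

lemma norm_msym: "norm (msym (M::real^'k^'k)) \<le> norm M"
proof -
  have "norm (msym M) = (1/2) * norm (M + transpose M)" by (simp add: msym_def)
  also have "\<dots> \<le> (1/2) * (norm M + norm (transpose M))" by (simp add: norm_triangle_ineq)
  finally show ?thesis by (simp add: norm_transpose)
qed

lemma bl_msym: "bounded_linear (msym :: real^'k^'k \<Rightarrow> real^'k^'k)"
proof (rule bounded_linear_intro[where K=1])
  fix x y :: "real^'k^'k" show "msym (x+y) = msym x + msym y" by (simp add: msym_def tr_add algebra_simps)
next
  fix r and x :: "real^'k^'k" show "msym (r *\<^sub>R x) = r *\<^sub>R msym x" by (simp add: msym_def transpose_scalar algebra_simps)
next
  fix x :: "real^'k^'k" show "norm (msym x) \<le> norm x * 1" using norm_msym by simp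
qed

lemma tr_msym: "transpose (msym M) = msym (M::real^'k^'k)"
  by (simp add: msym_def transpose_scalar tr_add add.commute)
lemma tr_mskew: "transpose (mskew M) = - mskew (M::real^'k^'k)"
  by (simp add: mskew_def transpose_scalar tr_diff algebra_simps)
lemma sym_skew_sum: "msym M + mskew M = (M::real^'k^'k)"
  by (simp add: vec_eq_iff msym_def mskew_def transpose_def field_simps)

lemma inner_tr_sym: assumes "transpose S = S" shows "inner (transpose M) S = inner M (S::real^'k^'k)"
proof -
  have "inner (transpose M) (transpose S) = inner M S" by (rule inner_transpose)
  with assms show ?thesis by simp
qed

lemma inner_sym_skew: assumes "transpose S = S" "transpose K = - K" shows "inner S (K::real^'k^'k) = 0"
proof -
  have "inner (transpose S) (transpose K) = inner S K" by (rule inner_transpose)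
  with assms have "inner S (- K) = inner S K" by simp
  thus ?thesis by simp
qed

lemma inner_msym: "transpose S = S \<Longrightarrow> inner (msym M) S = inner M (S::real^'k^'k)"
  by (simp add: msym_def inner_add_left inner_tr_sym)

lemma inner_mskew_self: "inner (mskew M) M = (norm (mskew (M::real^'k^'k)))^2"
proof -
  have "inner (mskew M) M = inner (mskew M) (msym M + mskew M)"
    by (simp only: sym_skew_sum)
  also have "\<dots> = inner (mskew M) (msym M) + inner (mskew M) (mskew M)"
    by (rule inner_add_right)
  also have "inner (mskew M) (msym M) = 0"
    using inner_sym_skew[OF tr_msym tr_mskew, of M M] by (simp add: inner_commute)
  finally show ?thesis by (simp add: power2_norm_eq_inner)
qed

lemma skew_conj: "transpose K = - K \<Longrightarrow>
   transpose (transpose (X::real^'p^'n) ** (K::real^'n^'n) ** X) = - (transpose X ** K ** X)"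
proof -
  assume a: "transpose K = - K"
  have "transpose (transpose X ** K ** X) = transpose X ** transpose (transpose X ** K)"
    by (simp only: matrix_transpose_mul transpose_transpose)
  also have "\<dots> = transpose X ** (transpose K ** X)"
    by (simp only: matrix_transpose_mul transpose_transpose)
  also have "\<dots> = - (transpose X ** K ** X)"
    by (simp only: a mm_minus_l mm_minus_r matrix_mul_assoc)
  finally show ?thesis .
qed



lemma tr_Delta: "transpose (transpose (X::real^'p^'n) ** X - mat 1) = transpose X ** X - mat 1"
  by (simp add: tr_diff matrix_transpose_mul)

lemma inner_sym_trmul: assumes "transpose S = S"
  shows "inner S (transpose V ** (X::real^'p^'n)) = inner S (transpose X ** (V::real^'p^'n))"
proof -
  have "transpose V ** X = transpose (transpose X ** V)" by (simp add: matrix_transpose_mul)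
  hence "inner S (transpose V ** X) = inner (transpose (transpose X ** V)) S" by (simp add: inner_commute)
  also have "\<dots> = inner (transpose X ** V) S" using assms by (rule inner_tr_sym)
  finally show ?thesis by (simp add: inner_commute)
qed

lemma gradL_val0:
  fixes f :: "real^'p^'n \<Rightarrow> real" and gradf :: "real^'p^'n \<Rightarrow> real^'p^'n"
  assumes f_grad: "(f has_derivative (\<lambda>H. inner (gradf X) H)) (at X)"
    and gd: "(gradf has_derivative Hf') (at X)"
    and gL: "(meritL f gradf mu has_derivative (\<lambda>H. inner gL H)) (at X)"
  shows "inner gL V = inner (gradf X) V - 1/2 * (inner (msym (transpose X ** gradf X)) (transpose X ** V + transpose V ** X - 0) + inner (msym (transpose X ** Hf' V + transpose V ** gradf X)) (transpose X ** X - mat 1)) + mu * (1/4 * (inner (transpose X ** X - mat 1) (transpose X ** V + transpose V ** X - 0) + inner (transpose X ** V + transpose V ** X - 0) (transpose X ** X - mat 1)))"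
proof -
  have dT: "((\<lambda>Y::real^'p^'n. transpose Y) has_derivative (\<lambda>H. transpose H)) (at X)"
    by (rule bounded_linear.has_derivative[OF bl_tr has_derivative_ident])
  have dXtG: "((\<lambda>Y. transpose Y ** gradf Y) has_derivative (\<lambda>h. transpose X ** Hf' h + transpose h ** gradf X)) (at X)"
    by (rule bounded_bilinear.FDERIV[OF bb_mm dT gd])
  have dS: "((\<lambda>Y. msym (transpose Y ** gradf Y)) has_derivative (\<lambda>h. msym (transpose X ** Hf' h + transpose h ** gradf X))) (at X)"
    by (rule bounded_linear.has_derivative[OF bl_msym dXtG])
  have dXtX: "((\<lambda>Y. transpose Y ** Y) has_derivative (\<lambda>h. transpose X ** h + transpose h ** X)) (at X)"
    by (rule bounded_bilinear.FDERIV[OF bb_mm dT has_derivative_ident])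
  have dD: "((\<lambda>Y. transpose Y ** Y - mat 1) has_derivative (\<lambda>h. transpose X ** h + transpose h ** X - 0)) (at X)"
    by (rule has_derivative_diff[OF dXtX has_derivative_const])
  have dI: "((\<lambda>Y. inner (msym (transpose Y ** gradf Y)) (transpose Y ** Y - mat 1)) has_derivative
     (\<lambda>h. inner (msym (transpose X ** gradf X)) (transpose X ** h + transpose h ** X - 0) + inner (msym (transpose X ** Hf' h + transpose h ** gradf X)) (transpose X ** X - mat 1))) (at X)"
    by (rule has_derivative_inner[OF dS dD])
  have dN0: "((\<lambda>Y. inner (transpose Y ** Y - mat 1) (transpose Y ** Y - mat 1)) has_derivative
     (\<lambda>h. inner (transpose X ** X - mat 1) (transpose X ** h + transpose h ** X - 0) + inner (transpose X ** h + transpose h ** X - 0) (transpose X ** X - mat 1))) (at X)"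
    by (rule has_derivative_inner[OF dD dD])
  have Neq: "Nfun = (\<lambda>Y::real^'p^'n. 1/4 * inner (transpose Y ** Y - mat 1) (transpose Y ** Y - mat 1))"
    by (simp add: fun_eq_iff Nfun_def power2_norm_eq_inner)
  have Meq: "meritL f gradf mu = (\<lambda>Y. f Y - 1/2 * inner (msym (transpose Y ** gradf Y)) (transpose Y ** Y - mat 1) + mu * (1/4 * inner (transpose Y ** Y - mat 1) (transpose Y ** Y - mat 1)))"
    by (simp add: fun_eq_iff meritL_def Neq)
  have dM: "(meritL f gradf mu has_derivative (\<lambda>h. inner (gradf X) h - 1/2 * (inner (msym (transpose X ** gradf X)) (transpose X ** h + transpose h ** X - 0) + inner (msym (transpose X ** Hf' h + transpose h ** gradf X)) (transpose X ** X - mat 1)) + mu * (1/4 * (inner (transpose X ** X - mat 1) (transpose X ** h + transpose h ** X - 0) + inner (transpose X ** h + transpose h ** X - 0) (transpose X ** X - mat 1))))) (at X)"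
    unfolding Meq
    by (rule has_derivative_add[OF has_derivative_diff[OF f_grad has_derivative_mult_right[OF dI]] has_derivative_mult_right[OF has_derivative_mult_right[OF dN0]]])
  have "(\<lambda>H. inner gL H) = (\<lambda>h. inner (gradf X) h - 1/2 * (inner (msym (transpose X ** gradf X)) (transpose X ** h + transpose h ** X - 0) + inner (msym (transpose X ** Hf' h + transpose h ** gradf X)) (transpose X ** X - mat 1)) + mu * (1/4 * (inner (transpose X ** X - mat 1) (transpose X ** h + transpose h ** X - 0) + inner (transpose X ** h + transpose h ** X - 0) (transpose X ** X - mat 1))))"
    by (rule has_derivative_unique[OF gL dM])
  thus ?thesis by (rule fun_cong)
qed

lemma gradL_val:
  fixes f :: "real^'p^'n \<Rightarrow> real" and gradf :: "real^'p^'n \<Rightarrow> real^'p^'n"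
  assumes f_grad: "(f has_derivative (\<lambda>H. inner (gradf X) H)) (at X)"
    and gd: "(gradf has_derivative Hf') (at X)"
    and gL: "(meritL f gradf mu has_derivative (\<lambda>H. inner gL H)) (at X)"
  shows "inner gL V = inner (gradf X) V - inner (msym (transpose X ** gradf X)) (transpose X ** V)
     - 1/2 * inner (transpose X ** Hf' V) (transpose X ** X - mat 1)
     - 1/2 * inner (transpose V ** gradf X) (transpose X ** X - mat 1)
     + mu * inner (transpose X ** X - mat 1) (transpose X ** V)"
proof -
  let ?D = "transpose X ** X - mat 1"
  let ?S = "msym (transpose X ** gradf X)"
  have sD: "transpose ?D = ?D" by (rule tr_Delta)
  have sS: "transpose ?S = ?S" by (rule tr_msym)
  have e1: "inner ?S (transpose X ** V + transpose V ** X - 0) = 2 * inner ?S (transpose X ** V)"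
    using inner_sym_trmul[OF sS, of V X] by (simp add: inner_add_right)
  have e2: "inner (msym (transpose X ** Hf' V + transpose V ** gradf X)) ?D
       = inner (transpose X ** Hf' V) ?D + inner (transpose V ** gradf X) ?D"
    by (simp add: inner_msym[OF sD] inner_add_left)
  have e3: "inner ?D (transpose X ** V + transpose V ** X - 0) = 2 * inner ?D (transpose X ** V)"
    using inner_sym_trmul[OF sD, of V X] by (simp add: inner_add_right)
  have e4: "inner (transpose X ** V + transpose V ** X - 0) ?D = 2 * inner ?D (transpose X ** V)"
    using e3 by (simp add: inner_commute)
  show ?thesis
    unfolding gradL_val0[OF f_grad gd gL, of V] e1 e2 e3 e4 by (simp add: algebra_simps)
qed



lemma core_identity:
  fixes X G :: "real^'p^'n" and Hf' :: "real^'p^'n \<Rightarrow> real^'p^'n" and lam mu :: real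
  defines "D \<equiv> transpose X ** X - mat 1"
    and "S \<equiv> msym (transpose X ** G)"
    and "A \<equiv> mskew (G ** transpose X)"
  defines "R \<equiv> A ** X" and "N \<equiv> X ** D"
  defines "Lm \<equiv> R + lam *\<^sub>R N"
  assumes val: "\<And>V. inner gL V = inner G V - inner S (transpose X ** V)
     - 1/2 * inner (transpose X ** Hf' V) D
     - 1/2 * inner (transpose V ** G) D
     + mu * inner D (transpose X ** V)"
  shows "inner gL Lm = (norm A)^2 - 1/2 * inner G (R ** D) - 3/2 * lam * inner S (D ** D)
           - 1/2 * inner (Hf' Lm) N + mu * lam * (norm N)^2"
proof -
  have sD: "transpose D = D" unfolding D_def by (rule tr_Delta)
  have sS: "transpose S = S" unfolding S_def by (rule tr_msym)
  have sDD: "transpose (D ** D) = D ** D" by (simp add: matrix_transpose_mul sD)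
  have skA: "transpose A = - A" unfolding A_def by (rule tr_mskew)
  have skXAX: "transpose (transpose X ** A ** X) = - (transpose X ** A ** X)" by (rule skew_conj[OF skA])
  have XtR: "transpose X ** R = transpose X ** A ** X" unfolding R_def by (simp add: matrix_mul_assoc)
  have XtX: "transpose X ** X = D + mat 1" unfolding D_def by simp
  have XtN: "transpose X ** N = D ** D + D"
    unfolding N_def by (simp add: matrix_mul_assoc XtX mm_add_r)
  have iGR: "inner G R = (norm A)^2"
  proof -
    have "inner G R = inner R G" by (rule inner_commute)
    also have "\<dots> = inner A (G ** transpose X)" unfolding R_def by (rule inner_mult_right)
    also have "\<dots> = (norm A)^2" unfolding A_def by (rule inner_mskew_self)
    finally show ?thesis .
  qed
  have iGN: "inner G N = inner S D"
  proof -
    have "inner G N = inner N G" by (rule inner_commute)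
    also have "\<dots> = inner D (transpose X ** G)" unfolding N_def by (rule inner_mult_left)
    also have "\<dots> = inner (transpose X ** G) D" by (rule inner_commute)
    also have "\<dots> = inner S D" unfolding S_def by (rule inner_msym[OF sD, symmetric])
    finally show ?thesis .
  qed
  have iSR: "inner S (transpose X ** R) = 0"
    unfolding XtR by (rule inner_sym_skew[OF sS skXAX])
  have iDR: "inner D (transpose X ** R) = 0"
    unfolding XtR by (rule inner_sym_skew[OF sD skXAX])
  have iSN: "inner S (transpose X ** N) = inner S (D ** D) + inner S D"
    unfolding XtN by (rule inner_add_right)
  have iDN: "inner D (transpose X ** N) = (norm N)^2"
  proof -
    have "inner N N = inner D (transpose X ** N)" unfolding N_def by (rule inner_mult_left)
    thus ?thesis by (simp add: power2_norm_eq_inner)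
  qed
  have iH: "inner (transpose X ** Hf' Lm) D = inner (Hf' Lm) N"
    unfolding N_def by (simp add: inner_mult_left)
  have iGND: "inner G (N ** D) = inner S (D ** D)"
  proof -
    have "inner G (N ** D) = inner (X ** (D ** D)) G" unfolding N_def by (simp add: matrix_mul_assoc inner_commute)
    also have "\<dots> = inner (D ** D) (transpose X ** G)" by (rule inner_mult_left)
    also have "\<dots> = inner (transpose X ** G) (D ** D)" by (rule inner_commute)
    also have "\<dots> = inner S (D ** D)" unfolding S_def by (rule inner_msym[OF sDD, symmetric])
    finally show ?thesis .
  qed
  have iLG: "inner (transpose Lm ** G) D = inner G (R ** D) + lam * inner S (D ** D)"
  proof -
    have "inner (transpose Lm ** G) D = inner G (Lm ** D)" by (simp add: inner_mult_left)
    also have "Lm ** D = R ** D + lam *\<^sub>R (N ** D)" unfolding Lm_def by (simp add: mm_add_r mm_scale_l)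
    finally show ?thesis by (simp add: inner_add_right iGND)
  qed
  have XtL: "transpose X ** Lm = transpose X ** R + lam *\<^sub>R (transpose X ** N)"
    unfolding Lm_def by (simp add: matrix_add_ldistrib mm_scale_r)
  have iGL: "inner G Lm = (norm A)^2 + lam * inner S D"
    unfolding Lm_def by (simp add: inner_add_right iGR iGN)
  have iSL: "inner S (transpose X ** Lm) = lam * (inner S (D ** D) + inner S D)"
    unfolding XtL by (simp add: inner_add_right iSR iSN)
  have iDL: "inner D (transpose X ** Lm) = lam * (norm N)^2"
    unfolding XtL by (simp add: inner_add_right iDR iDN)
  show ?thesis
    unfolding val[of Lm] iGL iSL iH iLG iDL by (simp add: algebra_simps)
qed

lemma orth_RN:
  fixes X G :: "real^'p^'n"
  defines "D \<equiv> transpose X ** X - mat 1"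
    and "A \<equiv> mskew (G ** transpose X)"
  shows "inner (A ** X) (X ** D) = 0"
proof -
  have sD: "transpose D = D" unfolding D_def by (rule tr_Delta)
  have skA: "transpose A = - A" unfolding A_def by (rule tr_mskew)
  have "inner (A ** X) (X ** D) = inner (X ** D) (A ** X)" by (rule inner_commute)
  also have "\<dots> = inner D (transpose X ** (A ** X))" by (rule inner_mult_left)
  also have "\<dots> = inner D (transpose X ** A ** X)" by (simp add: matrix_mul_assoc)
  also have "\<dots> = 0" by (rule inner_sym_skew[OF sD skew_conj[OF skA]])
  finally show ?thesis .
qed

lemma norm_R_le:
  fixes X :: "real^'p^'n" and A :: "real^'n^'n"
  shows "(norm (A ** X))^2 \<le> (1 + norm (transpose X ** X - mat 1)) * (norm A)^2"
proof -
  define W where "W = A ** X"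
  define d where "d = norm (transpose X ** X - mat 1)"
  have XtX: "transpose X ** X = (transpose X ** X - mat 1) + mat 1" by simp
  have "(norm (W ** transpose X))^2 = inner (W ** transpose X) (W ** transpose X)"
    by (simp add: power2_norm_eq_inner)
  also have "\<dots> = inner W (W ** transpose X ** X)" by (simp add: inner_mult_right)
  also have "W ** transpose X ** X = W ** (transpose X ** X - mat 1) + W"
    by (metis XtX matrix_add_ldistrib matrix_mul_assoc matrix_mul_rid)
  also have "inner W (W ** (transpose X ** X - mat 1) + W) = inner W (W ** (transpose X ** X - mat 1)) + (norm W)^2"
    by (simp add: inner_add_right power2_norm_eq_inner)
  also have "inner W (W ** (transpose X ** X - mat 1)) \<le> norm W * (norm W * d)"
  proof -
    have "inner W (W ** (transpose X ** X - mat 1)) \<le> norm W * norm (W ** (transpose X ** X - mat 1))"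
      by (rule norm_cauchy_schwarz)
    also have "\<dots> \<le> norm W * (norm W * d)" unfolding d_def
      by (rule mult_left_mono[OF norm_mult_le norm_ge_zero])
    finally show ?thesis .
  qed
  finally have h1: "(norm (W ** transpose X))^2 \<le> (1 + d) * (norm W)^2"
    by (simp add: algebra_simps power2_eq_square)
  have "(norm W)^2 = inner (A ** X) W" unfolding W_def by (simp add: power2_norm_eq_inner)
  also have "\<dots> = inner A (W ** transpose X)" by (rule inner_mult_right)
  also have "\<dots> \<le> norm A * norm (W ** transpose X)" by (rule norm_cauchy_schwarz)
  finally have h2: "(norm W)^2 \<le> norm A * norm (W ** transpose X)" .
  have d0: "0 \<le> d" unfolding d_def by simp
  have "((norm W)^2)^2 \<le> (norm A * norm (W ** transpose X))^2"
    by (rule power_mono[OF h2]) simp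
  also have "\<dots> = (norm A)^2 * (norm (W ** transpose X))^2" by (simp add: power_mult_distrib)
  also have "\<dots> \<le> (norm A)^2 * ((1 + d) * (norm W)^2)"
    by (rule mult_left_mono[OF h1]) simp
  finally have h3: "(norm W)^2 * (norm W)^2 \<le> ((1 + d) * (norm A)^2) * (norm W)^2"
    by (simp add: algebra_simps power2_eq_square)
  show ?thesis
  proof (cases "norm W = 0")
    case True thus ?thesis using d0 unfolding W_def d_def by simp
  next
    case False
    hence "0 < (norm W)^2" by simp
    with h3 have "(norm W)^2 \<le> (1 + d) * (norm A)^2" by (rule mult_right_le_imp_le)
    thus ?thesis unfolding W_def d_def .
  qed
qed

lemma norm_N_ge:
  fixes X :: "real^'p^'n"
  defines "D \<equiv> transpose X ** X - mat 1"
  shows "(1 - norm D) * (norm D)^2 \<le> (norm (X ** D))^2"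
proof -
  have XtX: "transpose X ** X = D + mat 1" unfolding D_def by simp
  have "(norm (X ** D))^2 = inner (X ** D) (X ** D)" by (simp add: power2_norm_eq_inner)
  also have "\<dots> = inner D (transpose X ** (X ** D))" by (rule inner_mult_left)
  also have "transpose X ** (X ** D) = D ** D + D" by (simp add: matrix_mul_assoc XtX mm_add_r)
  also have "inner D (D ** D + D) = inner D (D ** D) + (norm D)^2" by (simp add: inner_add_right power2_norm_eq_inner)
  finally have e: "(norm (X ** D))^2 = inner D (D ** D) + (norm D)^2" .
  have "- inner D (D ** D) \<le> norm D * norm (D ** D)"
    using norm_cauchy_schwarz[of "-D" "D ** D"] by simp
  also have "\<dots> \<le> norm D * (norm D * norm D)" by (rule mult_left_mono[OF norm_mult_le norm_ge_zero])
  finally have "- inner D (D ** D) \<le> norm D * (norm D * norm D)" .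
  thus ?thesis unfolding e by (simp add: algebra_simps power2_eq_square)
qed



lemma deriv_bound_dir:
  fixes F :: "'a::real_normed_vector \<Rightarrow> 'b::real_normed_vector"
  assumes dF: "(F has_derivative F') (at x)" and dpos: "\<delta> > 0"
    and bnd: "\<And>t. 0 < t \<Longrightarrow> t < \<delta> \<Longrightarrow> norm (F (x + t *\<^sub>R v) - F x) \<le> K * t"
  shows "norm (F' v) \<le> K"
proof -
  have bl: "bounded_linear F'" and lim: "\<forall>e>0. \<exists>d>0. \<forall>y. norm (y - x) < d \<longrightarrow> norm (F y - F x - F' (y - x)) \<le> e * norm (y - x)"
    using dF unfolding has_derivative_at_alt by auto
  have main: "norm (F' v) \<le> K + e * norm v" if e: "e > 0" for e
  proof -
    obtain d where d: "d > 0" and hd: "\<And>y. norm (y - x) < d \<Longrightarrow> norm (F y - F x - F' (y - x)) \<le> e * norm (y - x)"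
      using lim e by blast
    define t where "t = min (\<delta>/2) (d / (2 * (norm v + 1)))"
    have p: "0 < 2 * (norm v + 1)" by (smt (verit) norm_ge_zero)
    have q: "0 < d / (2 * (norm v + 1))" using d p by (rule divide_pos_pos)
    have t0: "0 < t" unfolding t_def using dpos q by linarith
    have tdel: "t < \<delta>" unfolding t_def using dpos by linarith
    have "t \<le> d / (2 * (norm v + 1))" unfolding t_def by linarith
    hence "t * (2 * (norm v + 1)) \<le> d" by (rule pos_le_divide_eq[OF p, THEN iffD1])
    moreover have "t * norm v < t * (2 * (norm v + 1))"
      using t0 by (intro mult_strict_left_mono) (smt (verit) norm_ge_zero, simp)
    ultimately have "t * norm v < d" by linarith
    hence ny: "norm ((x + t *\<^sub>R v) - x) < d" using t0 by simp
    have lin: "F' (t *\<^sub>R v) = t *\<^sub>R F' v" using bl by (simp add: linear_simps)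
    have "norm (F' (t *\<^sub>R v)) \<le> norm (F (x + t *\<^sub>R v) - F x) + norm (F (x + t *\<^sub>R v) - F x - F' (t *\<^sub>R v))"
      using norm_triangle_ineq4[of "F (x + t *\<^sub>R v) - F x" "F (x + t *\<^sub>R v) - F x - F' (t *\<^sub>R v)"] by simp
    also have "\<dots> \<le> K * t + e * (t * norm v)"
      using bnd[OF t0 tdel] hd[OF ny] t0 by simp
    finally have "t * norm (F' v) \<le> t * (K + e * norm v)" using t0 lin by (simp add: algebra_simps)
    thus ?thesis using t0 by simp
  qed
  show ?thesis
  proof (rule field_le_epsilon)
    fix e :: real assume e: "0 < e"
    have np: "0 < norm v + 1" by (smt (verit) norm_ge_zero)
    have "norm (F' v) \<le> K + (e / (norm v + 1)) * norm v"
      by (rule main) (rule divide_pos_pos[OF e np])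
    also have "(e / (norm v + 1)) * norm v \<le> e"
    proof -
      have "e * norm v \<le> e * (norm v + 1)" using e by simp
      hence "e * norm v / (norm v + 1) \<le> e" using np by (simp add: pos_divide_le_eq)
      thus ?thesis by simp
    qed
    finally show "norm (F' v) \<le> K + e" by simp
  qed
qed



lemma gen_cancel: "((a::'a::ab_group_add) + b) + (- a + b) = b + b"
  by (simp add: algebra_simps)
lemma gen_double: "(c::real) *\<^sub>R (w::'a::real_vector) + c *\<^sub>R w = (2 * c) *\<^sub>R w"
  by (simp add: scaleR_left_distrib[symmetric])
lemma gen_expand1: "(a::'a::real_vector) - t *\<^sub>R b - (t *\<^sub>R c - t *\<^sub>R (t *\<^sub>R e)) = a - t *\<^sub>R (b + c) + (t * t) *\<^sub>R e"
  by (simp add: algebra_simps)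
lemma gen_expand1b: "(a::'a::real_vector) - t *\<^sub>R b - t *\<^sub>R (c - t *\<^sub>R e) = a - t *\<^sub>R (c + b) + (t * t) *\<^sub>R e"
  by (simp add: algebra_simps)
lemma gen_expand2: "((D::'a::real_vector) + I) - c *\<^sub>R (E + D) + Q - I = (1 - c) *\<^sub>R D - c *\<^sub>R E + Q"
  by (simp add: algebra_simps)

lemma inward:
  fixes X G :: "real^'p^'n" and lam eps :: real
  defines "D \<equiv> transpose X ** X - mat 1"
    and "A \<equiv> mskew (G ** transpose X)"
  defines "R \<equiv> A ** X" and "N \<equiv> X ** D"
  defines "Lm \<equiv> R + lam *\<^sub>R N"
  assumes lam: "lam > 0" and eps: "eps > 0" "eps < 1" and dle: "norm D \<le> eps"
  shows "\<exists>\<delta>>0. \<forall>t. 0 < t \<and> t < \<delta> \<longrightarrow> norm (transpose (X - t *\<^sub>R Lm) ** (X - t *\<^sub>R Lm) - mat 1) \<le> eps"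
proof -
  have sD: "transpose D = D" unfolding D_def by (rule tr_Delta)
  have sDD: "transpose (D ** D) = D ** D" by (simp add: matrix_transpose_mul sD)
  have skA: "transpose A = - A" unfolding A_def by (rule tr_mskew)
  have skXAX: "transpose (transpose X ** A ** X) = - (transpose X ** A ** X)" by (rule skew_conj[OF skA])
  have XtX: "transpose X ** X = D + mat 1" unfolding D_def by simp
  have XtR: "transpose X ** R = transpose X ** A ** X" unfolding R_def by (simp add: matrix_mul_assoc)
  have XtN: "transpose X ** N = D ** D + D"
    unfolding N_def by (simp add: matrix_mul_assoc XtX mm_add_r)
  define P where "P = transpose X ** Lm"
  have P: "P = transpose X ** A ** X + lam *\<^sub>R (D ** D + D)"
    unfolding P_def Lm_def by (simp add: matrix_add_ldistrib mm_scale_r XtR XtN)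
  have Pt: "transpose P = - (transpose X ** A ** X) + lam *\<^sub>R (D ** D + D)"
    unfolding P by (simp add: tr_add transpose_scalar skXAX sDD sD)
  have PPt: "P + transpose P = (2 * lam) *\<^sub>R (D ** D + D)"
    by (simp only: Pt) (simp only: P gen_cancel gen_double)
  have LtX: "transpose Lm ** X = transpose P" unfolding P_def by (simp add: matrix_transpose_mul)
  define d where "d = norm D"
  define M where "M = (norm Lm)^2"
  have d0: "0 \<le> d" unfolding d_def by simp
  have M0: "0 \<le> M" unfolding M_def by simp
  have d1: "d < 1" using dle eps unfolding d_def by linarith
  have expand: "transpose (X - t *\<^sub>R Lm) ** (X - t *\<^sub>R Lm) - mat 1
      = (1 - 2 * t * lam) *\<^sub>R D - (2 * t * lam) *\<^sub>R (D ** D) + (t^2) *\<^sub>R (transpose Lm ** Lm)" for t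
  proof -
    have "transpose (X - t *\<^sub>R Lm) ** (X - t *\<^sub>R Lm)
        = transpose X ** X - t *\<^sub>R (P + transpose P) + (t * t) *\<^sub>R (transpose Lm ** Lm)"
      by (simp only: tr_diff transpose_scalar mm_diff_r mm_diff_l mm_scale_l mm_scale_r P_def[symmetric] LtX gen_expand1 gen_expand1b)
    also have "\<dots> = (D + mat 1) - (2 * t * lam) *\<^sub>R (D ** D + D) + (t * t) *\<^sub>R (transpose Lm ** Lm)"
      by (simp only: XtX PPt scaleR_scaleR mult_ac)
    finally show ?thesis by (simp only: gen_expand2 power2_eq_square)
  qed
  have bound: "norm (transpose (X - t *\<^sub>R Lm) ** (X - t *\<^sub>R Lm) - mat 1) \<le> d - 2 * t * lam * d * (1 - d) + t^2 * M"
    if t0: "0 < t" and t1: "2 * t * lam \<le> 1" for t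
  proof -
    have "norm ((1 - 2 * t * lam) *\<^sub>R D - (2 * t * lam) *\<^sub>R (D ** D) + (t^2) *\<^sub>R (transpose Lm ** Lm))
      \<le> norm ((1 - 2 * t * lam) *\<^sub>R D) + norm ((2 * t * lam) *\<^sub>R (D ** D)) + norm ((t^2) *\<^sub>R (transpose Lm ** Lm))"
      by (rule order_trans[OF norm_triangle_ineq add_right_mono[OF norm_triangle_ineq4]])
    also have "norm ((1 - 2 * t * lam) *\<^sub>R D) = (1 - 2 * t * lam) * d"
      using t1 unfolding d_def by simp
    also have "norm ((2 * t * lam) *\<^sub>R (D ** D)) \<le> (2 * t * lam) * (d * d)"
    proof -
      have "norm ((2 * t * lam) *\<^sub>R (D ** D)) = (2 * t * lam) * norm (D ** D)" using t0 lam by simp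
      also have "\<dots> \<le> (2 * t * lam) * (d * d)" unfolding d_def
        by (rule mult_left_mono[OF norm_mult_le]) (use t0 lam in simp)
      finally show ?thesis .
    qed
    also have "norm ((t^2) *\<^sub>R (transpose Lm ** Lm)) \<le> t^2 * M"
    proof -
      have "norm ((t^2) *\<^sub>R (transpose Lm ** Lm)) = t^2 * norm (transpose Lm ** Lm)" by simp
      also have "\<dots> \<le> t^2 * (norm (transpose Lm) * norm Lm)"
        by (rule mult_left_mono[OF norm_mult_le]) simp
      finally show ?thesis unfolding M_def by (simp add: norm_transpose power2_eq_square)
    qed
    finally show ?thesis unfolding expand by (simp add: algebra_simps)
  qed
  define q where "q = (eps - d + 2 * lam * d * (1 - d)) / (M + 1)"
  have num0: "0 < eps - d + 2 * lam * d * (1 - d)"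
  proof (cases "d < eps")
    case True
    have "0 \<le> 2 * lam * d * (1 - d)" using lam d0 d1 by simp
    thus ?thesis using True by linarith
  next
    case False
    hence "d = eps" using dle unfolding d_def by linarith
    hence "0 < 2 * lam * d * (1 - d)" using lam eps d1 by simp
    moreover have "eps - d = 0" using \<open>d = eps\<close> by simp
    ultimately show ?thesis by linarith
  qed
  have M1: "0 < M + 1" using M0 by linarith
  have q0: "0 < q" unfolding q_def using num0 M1 by (rule divide_pos_pos)
  define \<delta> where "\<delta> = min (1 / (2 * lam)) (min 1 q)"
  have del0: "0 < \<delta>" unfolding \<delta>_def using lam q0 by simp
  show ?thesis
  proof (intro exI[of _ \<delta>] conjI allI impI del0)
    fix t assume t: "0 < t \<and> t < \<delta>"
    hence t0: "0 < t" and tl: "t < \<delta>" by auto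
    have "t < 1 / (2 * lam)" using tl unfolding \<delta>_def by linarith
    hence t1: "2 * t * lam \<le> 1" using lam by (simp add: field_simps)
    have tle1: "t \<le> 1" using tl unfolding \<delta>_def by linarith
    have "t < q" using tl unfolding \<delta>_def by linarith
    hence "t * (M + 1) < eps - d + 2 * lam * d * (1 - d)" unfolding q_def using M1 by (simp add: pos_less_divide_eq)
    hence tM: "t * M \<le> eps - d + 2 * lam * d * (1 - d)" using t0 by (simp add: algebra_simps)
    have "t^2 * M = t * (t * M)" by (simp add: power2_eq_square)
    also have "\<dots> \<le> t * (eps - d + 2 * lam * d * (1 - d))" by (rule mult_left_mono[OF tM]) (use t0 in simp)
    also have "\<dots> = t * (eps - d) + 2 * t * lam * d * (1 - d)" by (simp add: algebra_simps)
    also have "t * (eps - d) \<le> eps - d"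
      using t0 tle1 dle unfolding d_def by (intro mult_left_le_one_le) auto
    finally have "t^2 * M \<le> eps - d + 2 * t * lam * d * (1 - d)" by simp
    with bound[OF t0 t1] show "norm (transpose (X - t *\<^sub>R Lm) ** (X - t *\<^sub>R Lm) - mat 1) \<le> eps" by linarith
  qed
qed



lemma hess_bound:
  fixes gradf :: "real^'p^'n \<Rightarrow> real^'p^'n" and X :: "real^'p^'n" and lam eps L :: real
  assumes gd: "(gradf has_derivative Hf') (at X)"
    and lam: "lam > 0" and eps: "eps > 0" "eps < 1" and XS: "X \<in> stiefel_eps eps"
    and L_lip: "\<forall>X\<in>stiefel_eps eps. \<forall>Y\<in>stiefel_eps eps. norm (gradf X - gradf Y) \<le> L * norm (X - Y)"
  shows "norm (Hf' (mskew (gradf X ** transpose X) ** X + lam *\<^sub>R (X ** (transpose X ** X - mat 1))))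
     \<le> L * norm (mskew (gradf X ** transpose X) ** X + lam *\<^sub>R (X ** (transpose X ** X - mat 1)))"
proof -
  define Lm where "Lm = mskew (gradf X ** transpose X) ** X + lam *\<^sub>R (X ** (transpose X ** X - mat 1))"
  have dle: "norm (transpose X ** X - mat 1) \<le> eps" using XS by (simp add: stiefel_eps_def)
  obtain \<delta> where d0: "\<delta> > 0" and hd: "\<forall>t. 0 < t \<and> t < \<delta> \<longrightarrow> norm (transpose (X - t *\<^sub>R Lm) ** (X - t *\<^sub>R Lm) - mat 1) \<le> eps"
    using inward[OF lam eps dle, of "gradf X"] unfolding Lm_def by blast
  have bl: "bounded_linear Hf'" by (rule has_derivative_bounded_linear[OF gd])
  have "norm (Hf' (- Lm)) \<le> L * norm Lm"
  proof (rule deriv_bound_dir[OF gd d0])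
    fix t :: real assume t0: "0 < t" and tl: "t < \<delta>"
    have YS: "X + t *\<^sub>R (- Lm) \<in> stiefel_eps eps" using hd t0 tl by (simp add: stiefel_eps_def)
    have "norm (gradf (X + t *\<^sub>R (- Lm)) - gradf X) \<le> L * norm ((X + t *\<^sub>R (- Lm)) - X)"
      using L_lip YS XS by blast
    also have "\<dots> = L * norm Lm * t" using t0 by simp
    finally show "norm (gradf (X + t *\<^sub>R (- Lm)) - gradf X) \<le> L * norm Lm * t" .
  qed
  moreover have "Hf' (- Lm) = - Hf' Lm" using bl by (simp add: linear_simps)
  ultimately show ?thesis unfolding Lm_def by simp
qed

lemma cont_XtX: "continuous_on UNIV (\<lambda>X::real^'p^'n. transpose X ** X)"
  by (rule bounded_bilinear.continuous_on[OF bb_mm bounded_linear.continuous_on[OF bl_tr continuous_on_id] continuous_on_id])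

lemma stiefel_compact: "compact (stiefel_eps eps :: (real^'p^'n) set)"
proof -
  have cl: "closed (stiefel_eps eps :: (real^'p^'n) set)"
    unfolding stiefel_eps_def
    by (rule closed_Collect_le[OF continuous_on_norm[OF continuous_on_diff[OF cont_XtX continuous_on_const]] continuous_on_const])
  define n1 where "n1 = norm (mat 1 :: real^'p^'p)"
  have bnd: "norm X \<le> 1 + (n1 * eps + n1^2)" if XS: "X \<in> (stiefel_eps eps :: (real^'p^'n) set)" for X
  proof -
    have dle: "norm (transpose X ** X - mat 1) \<le> eps" using XS by (simp add: stiefel_eps_def)
    have "(norm X)^2 = inner (X ** mat 1) X" by (simp add: power2_norm_eq_inner)
    also have "\<dots> = inner (mat 1) (transpose X ** X)" by (rule inner_mult_left)
    also have "inner (mat 1) (transpose X ** X) = inner (mat 1) (transpose X ** X - mat 1) + n1^2"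
      unfolding n1_def by (simp add: inner_diff_right power2_norm_eq_inner)
    also have "inner (mat 1 :: real^'p^'p) (transpose X ** X - mat 1) \<le> n1 * eps"
    proof -
      have "inner (mat 1 :: real^'p^'p) (transpose X ** X - mat 1) \<le> n1 * norm (transpose X ** X - mat 1)"
        unfolding n1_def by (rule norm_cauchy_schwarz)
      also have "\<dots> \<le> n1 * eps" by (rule mult_left_mono[OF dle]) (simp add: n1_def)
      finally show ?thesis .
    qed
    finally have "(norm X)^2 \<le> n1 * eps + n1^2" by simp
    moreover have "norm X \<le> 1 + (norm X)^2"
    proof -
      have "0 \<le> (norm X - 1) * (norm X - 1)" by simp
      hence "0 \<le> norm X * norm X - 2 * norm X + 1" by (simp add: algebra_simps)
      moreover have "0 \<le> norm X" by simp
      ultimately have "norm X \<le> 1 + norm X * norm X" by linarith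
      thus ?thesis by (simp add: power2_eq_square)
    qed
    ultimately show ?thesis by linarith
  qed
  have "bounded (stiefel_eps eps :: (real^'p^'n) set)"
    unfolding bounded_iff using bnd by blast
  with cl show ?thesis by (simp add: compact_eq_bounded_closed)
qed

lemma sup_bound:
  fixes h :: "real^'p^'n \<Rightarrow> 'b::real_normed_vector"
  assumes hc: "continuous_on (stiefel_eps eps) h" and XS: "X \<in> stiefel_eps eps"
  shows "norm (h X) \<le> (SUP Y\<in>stiefel_eps eps. norm (h Y))"
proof -
  have "compact (h ` stiefel_eps eps)" by (rule compact_continuous_image[OF hc stiefel_compact])
  hence "bounded (h ` stiefel_eps eps)" by (rule compact_imp_bounded)
  then obtain B where B: "\<forall>x\<in>h ` stiefel_eps eps. norm x \<le> B" unfolding bounded_iff by blast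
  have "bdd_above ((\<lambda>Y. norm (h Y)) ` stiefel_eps eps)"
    by (rule bdd_aboveI2[of _ _ B]) (use B in auto)
  thus ?thesis by (rule cSUP_upper[OF XS])
qed



lemma coef_iv:
  fixes eps :: real assumes eps: "0 < eps" "eps < 3/4"
  shows "(2 - eps) / (4 * (1 - eps)) \<le> 3 * (1 + eps) / (2 * (3 - 4 * eps))"
proof -
  have p1: "0 < 4 * (1 - eps)" "0 < 2 * (3 - 4 * eps)" using eps by auto
  have q: "0 \<le> eps * (11 - 10 * eps)" using eps by simp
  have "(2 - eps) * (2 * (3 - 4 * eps)) \<le> 3 * (1 + eps) * (4 * (1 - eps))"
    using q by (simp add: algebra_simps)
  thus ?thesis using p1 by (simp add: divide_simps)
qed

lemma gen_half: "0 < x \<Longrightarrow> 1/x - (2 - x)/(2*x) = (1::real)/2"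
  by (simp add: field_simps)

lemma gen_v: "0 < (x::real) \<Longrightarrow> 0 < y \<Longrightarrow> L2/(8*(y/(2*x))) + L2/(8*(y/(2*x)))/y = L2 * (x*(y+1)/(4*y^2))"
  by (simp add: field_simps power2_eq_square)

lemma gen_i: "0 < (lam::real) \<Longrightarrow> 0 < z \<Longrightarrow> 0 < y \<Longrightarrow>
   3/4*lam*(2/z*(L*y + 3* s + M*x^2/(lam*y))) = lam*L*(3*y/(2*z)) + lam* s*(9/(2*z)) + M*(3*x^2/(2*z*y))"
  by (simp add: field_simps power2_eq_square)

lemma gen_bpart: "0 \<le> (Q::real) \<Longrightarrow> d2 \<le> b2 / y \<Longrightarrow> M * b2 - Q * d2 \<ge> (M - Q / y) * b2"
proof -
  assume q: "0 \<le> Q" and d: "d2 \<le> b2 / y"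
  have "Q * d2 \<le> Q * (b2 / y)" by (rule mult_left_mono[OF d q])
  thus ?thesis by (simp add: left_diff_distrib)
qed

lemma gen_r2: "0 < (lam::real) \<Longrightarrow> 0 < x \<Longrightarrow> (lam*mu)/(4*lam^2*x) * lam^2 = lam*mu/(4*x)"
  by (simp add: field_simps power2_eq_square)

lemma final_arith:
  fixes V al a b d g s0 s Lh L h lam mu eps nl :: real
  assumes lam: "lam > 0" and eps: "0 < eps" "eps < 3/4" and L: "L > 0"
    and d0: "0 \<le> d" and dle: "d \<le> eps"
    and a0: "0 \<le> a" and b0: "0 \<le> b"
    and ha: "a^2 \<le> (1 + d) * al^2"
    and hb: "(1 - d) * d^2 \<le> b^2"
    and g0: "0 \<le> g" and gL: "g \<le> Lh" and LLh: "L \<le> Lh"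
    and s00: "0 \<le> s0" and ss: "s0 \<le> s"
    and h0: "0 \<le> h" and hL: "h \<le> L * (a + lam * b)"
    and mu: "mu \<ge> 2/(3 - 4*eps) * (L*(1-eps) + 3* s + Lh^2*(1+eps)^2/(lam*(1-eps)))"
    and V: "V \<ge> al^2 - 1/2 * g * a * d - 3/2 * lam * s0 * d^2 - 1/2 * h * b + mu * lam * b^2"
    and nl: "nl^2 = a^2 + lam^2 * b^2"
  shows "V \<ge> min (1/2) ((lam*mu)/(4*lam^2*(1+eps))) * nl^2"
proof -
  define c where "c = (1 - eps) / (2 * (1 + eps))"
  have e1: "0 < 1 - eps" "0 < 1 + eps" "0 < 3 - 4 * eps" using eps by auto
  have c0: "0 < c" unfolding c_def using e1 by simp
  have Lh0: "0 < Lh" using L LLh by linarith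
  have s0': "0 \<le> s" using s00 ss by linarith
  have A: "a^2 \<le> (1 + eps) * al^2"
    using ha dle by (smt (verit) mult_right_mono zero_le_power2)
  have A': "a^2 / (1 + eps) \<le> al^2" using A e1 by (simp add: divide_simps mult.commute)
  have half: "1 / (1 + eps) - c = 1/2"
  proof -
    have "2 - (1 + eps) = 1 - eps" by simp
    thus ?thesis using gen_half[of "1 + eps"] e1 unfolding c_def by simp
  qed
  have B0: "(1 - eps) * d^2 \<le> b^2"
    using hb dle by (smt (verit) mult_right_mono zero_le_power2)
  have B: "d^2 \<le> b^2 / (1 - eps)" using B0 e1 by (simp add: divide_simps mult.commute)
  have amgm: "x * y \<le> c * x^2 + y^2 / (4 * c)" for x y
  proof -
    have "0 \<le> (2 * c * x - y)^2" by simp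
    hence "0 \<le> 4 * c^2 * x^2 - 4 * c * x * y + y^2" by (simp add: power2_eq_square algebra_simps)
    hence "4 * c * (x * y) \<le> 4 * c * (c * x^2 + y^2 / (4 * c))"
      using c0 by (simp add: algebra_simps power2_eq_square)
    thus ?thesis using c0 by simp
  qed
  have t1: "g * a * d \<le> Lh * a * d"
    using gL a0 d0 by (simp add: mult_right_mono)
  have t2: "h * b \<le> L * a * b + lam * L * b^2"
  proof -
    have "h * b \<le> L * (a + lam * b) * b" using hL b0 by (rule mult_right_mono)
    thus ?thesis by (simp add: algebra_simps power2_eq_square)
  qed
  have t3: "s0 * d^2 \<le> s * d^2" using ss by (simp add: mult_right_mono)
  have am1: "Lh * a * d \<le> c * a^2 + (Lh * d)^2 / (4 * c)" using amgm[of a "Lh * d"] by (simp add: mult_ac)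
  have am2: "L * a * b \<le> c * a^2 + (L * b)^2 / (4 * c)" using amgm[of a "L * b"] by (simp add: mult_ac)
  have L2: "L^2 \<le> Lh^2" using L LLh by (simp add: power_mono)
  have am2': "(L * b)^2 / (4 * c) \<le> Lh^2 * b^2 / (4 * c)"
    using L2 c0 by (simp add: power_mult_distrib divide_right_mono mult_right_mono)
  have Vge: "V \<ge> (al^2 - c * a^2) + ((mu * lam - lam * L / 2 - Lh^2 / (8 * c)) * b^2
               - (Lh^2 / (8 * c) + 3/2 * lam * s) * d^2)"
  proof -
    have "g * a * d \<le> c * a^2 + (Lh * d)^2 / (4 * c)" using t1 am1 by linarith
    hence "1/2 * (g * a * d) \<le> 1/2 * (c * a^2 + (Lh * d)^2 / (4 * c))" by simp
    hence "1/2 * g * a * d \<le> 1/2 * (c * a^2 + (Lh * d)^2 / (4 * c))" by (simp only: mult.assoc)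
    moreover have "h * b \<le> c * a^2 + Lh^2 * b^2 / (4 * c) + lam * L * b^2"
      using t2 am2 am2' by linarith
    hence "1/2 * (h * b) \<le> 1/2 * (c * a^2 + Lh^2 * b^2 / (4 * c) + lam * L * b^2)" by simp
    hence "1/2 * h * b \<le> 1/2 * (c * a^2 + Lh^2 * b^2 / (4 * c) + lam * L * b^2)" by (simp only: mult.assoc)
    moreover have "3/2 * lam * s0 * d^2 \<le> 3/2 * lam * s * d^2" using t3 lam by simp
    ultimately show ?thesis using V by (simp add: power_mult_distrib algebra_simps)
  qed
  define K where "K = (mu * lam - lam * L / 2 - Lh^2 / (8 * c)) - (Lh^2 / (8 * c) + 3/2 * lam * s) / (1 - eps)"
  have bpart: "(mu * lam - lam * L / 2 - Lh^2 / (8 * c)) * b^2 - (Lh^2 / (8 * c) + 3/2 * lam * s) * d^2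
      \<ge> K * b^2"
  proof -
    have nn: "0 \<le> Lh^2 / (8 * c) + 3/2 * lam * s" using c0 lam s0' by simp
    show ?thesis unfolding K_def by (rule gen_bpart[OF nn B])
  qed
  have apart: "al^2 - c * a^2 \<ge> a^2 / 2"
  proof -
    have h1: "1 / (1 + eps) = c + 1/2" using half by linarith
    have "a^2 / (1 + eps) = a^2 * (1 / (1 + eps))" by simp
    also have "\<dots> = a^2 * (c + 1/2)" by (simp only: h1)
    also have "\<dots> = c * a^2 + a^2 / 2" by (simp add: algebra_simps)
    finally show ?thesis using A' by linarith
  qed
  have mu0: "0 \<le> mu"
  proof -
    have "0 \<le> L*(1-eps) + 3* s + Lh^2*(1+eps)^2/(lam*(1-eps))" using L e1 s0' lam by simp
    moreover have "0 \<le> 2/(3 - 4*eps)" using e1 by simp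
    ultimately show ?thesis using mu by (smt (verit) mult_nonneg_nonneg)
  qed
  have Kge: "K \<ge> lam * mu / 4"
  proof -
    have v: "Lh^2 / (8 * c) + Lh^2 / (8 * c) / (1 - eps) = Lh^2 * ((1 + eps) * (2 - eps) / (4 * (1 - eps)^2))"
    proof -
      have "(1 - eps) + 1 = 2 - eps" by simp
      thus ?thesis using gen_v[of "1 + eps" "1 - eps" "Lh^2"] e1 unfolding c_def by simp
    qed
    have i: "3/4 * lam * mu \<ge> lam * L * (3 * (1 - eps) / (2 * (3 - 4 * eps))) + lam * s * (9 / (2 * (3 - 4 * eps)))
             + Lh^2 * (3 * (1 + eps)^2 / (2 * (3 - 4 * eps) * (1 - eps)))"
    proof -
      have "3/4 * lam * mu \<ge> 3/4 * lam * (2/(3 - 4*eps) * (L*(1-eps) + 3* s + Lh^2*(1+eps)^2/(lam*(1-eps))))"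
        by (rule mult_left_mono[OF mu]) (use lam in simp)
      also have "3/4 * lam * (2/(3 - 4*eps) * (L*(1-eps) + 3* s + Lh^2*(1+eps)^2/(lam*(1-eps))))
         = lam * L * (3 * (1 - eps) / (2 * (3 - 4 * eps))) + lam * s * (9 / (2 * (3 - 4 * eps)))
             + Lh^2 * (3 * (1 + eps)^2 / (2 * (3 - 4 * eps) * (1 - eps)))"
        by (rule gen_i[OF lam e1(3) e1(1)])
      finally show ?thesis by linarith
    qed
    have ii: "lam * L * (3 * (1 - eps) / (2 * (3 - 4 * eps))) \<ge> lam * L / 2"
    proof -
      have "1/2 \<le> 3 * (1 - eps) / (2 * (3 - 4 * eps))" using e1 eps by (simp add: divide_simps)
      hence "lam * L * (1/2) \<le> lam * L * (3 * (1 - eps) / (2 * (3 - 4 * eps)))"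
        using lam L by (intro mult_left_mono) auto
      thus ?thesis by simp
    qed
    have iii: "lam * s * (9 / (2 * (3 - 4 * eps))) \<ge> 3/2 * lam * s / (1 - eps)"
    proof -
      have "3 / (2 * (1 - eps)) \<le> 9 / (2 * (3 - 4 * eps))" using e1 eps by (simp add: divide_simps)
      hence "lam * s * (3 / (2 * (1 - eps))) \<le> lam * s * (9 / (2 * (3 - 4 * eps)))"
        using lam s0' by (intro mult_left_mono) auto
      thus ?thesis by (simp add: mult_ac)
    qed
    have iv: "Lh^2 * (3 * (1 + eps)^2 / (2 * (3 - 4 * eps) * (1 - eps))) \<ge> Lh^2 * ((1 + eps) * (2 - eps) / (4 * (1 - eps)^2))"
    proof -
      have f: "(1 + eps) / (1 - eps) \<ge> 0" using e1 by simp
      have "(2 - eps) / (4 * (1 - eps)) * ((1 + eps) / (1 - eps)) \<le> 3 * (1 + eps) / (2 * (3 - 4 * eps)) * ((1 + eps) / (1 - eps))"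
        by (rule mult_right_mono[OF coef_iv[OF eps] f])
      hence "(1 + eps) * (2 - eps) / (4 * (1 - eps)^2) \<le> 3 * (1 + eps)^2 / (2 * (3 - 4 * eps) * (1 - eps))"
        by (simp add: power2_eq_square mult_ac)
      thus ?thesis by (rule mult_left_mono) simp
    qed
    have Kf: "K = (mu * lam - lam * L / 2 - Lh^2 / (8 * c)) - (Lh^2 / (8 * c) / (1 - eps) + 3/2 * lam * s / (1 - eps))"
      unfolding K_def add_divide_distrib by (rule refl)
    have cm: "mu * lam = lam * mu" by simp
    have i': "3/4 * (lam * mu) \<ge> lam * L * (3 * (1 - eps) / (2 * (3 - 4 * eps))) + lam * s * (9 / (2 * (3 - 4 * eps)))
             + Lh^2 * (3 * (1 + eps)^2 / (2 * (3 - 4 * eps) * (1 - eps)))"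
      using i by (simp only: mult.assoc)
    show ?thesis using Kf cm i' ii iii iv v by linarith
  qed
  define rho where "rho = min (1/2) ((lam*mu)/(4*lam^2*(1+eps)))"
  have r1: "rho \<le> 1/2" unfolding rho_def by simp
  have r2: "rho * lam^2 \<le> lam * mu / 4"
  proof -
    have "rho * lam^2 \<le> (lam*mu)/(4*lam^2*(1+eps)) * lam^2" unfolding rho_def
      by (rule mult_right_mono) auto
    also have "\<dots> = lam * mu / (4 * (1 + eps))" by (rule gen_r2[OF lam e1(2)])
    also have "\<dots> \<le> lam * mu / 4"
    proof (rule divide_left_mono)
      show "4 \<le> 4 * (1 + eps)" using eps by simp
      show "0 \<le> lam * mu" using lam mu0 by simp
      show "0 < 4 * (1 + eps) * 4" using eps by simp
    qed
    finally show ?thesis .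
  qed
  have "rho * nl^2 = rho * a^2 + (rho * lam^2) * b^2" by (simp only: nl distrib_left mult.assoc)
  also have "\<dots> \<le> a^2 / 2 + K * b^2"
  proof (rule add_mono)
    have "rho * a^2 \<le> 1/2 * a^2" by (rule mult_right_mono[OF r1]) simp
    thus "rho * a^2 \<le> a^2 / 2" by simp
    have "rho * lam^2 \<le> K" using r2 Kge by linarith
    thus "rho * lam^2 * b^2 \<le> K * b^2" by (rule mult_right_mono) simp
  qed
  also have "\<dots> \<le> V" using Vge apart bpart by linarith
  finally show ?thesis unfolding rho_def .
qed



theorem proposition7:
  fixes f :: "real^'p^'n \<Rightarrow> real"
    and gradf :: "real^'p^'n \<Rightarrow> real^'p^'n"
    and Hf :: "real^'p^'n \<Rightarrow> ((real^'p^'n) \<Rightarrow>\<^sub>L (real^'p^'n))"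
    and gradL :: "real^'p^'n \<Rightarrow> real^'p^'n"
    and lam eps L mu :: real
  assumes np: "CARD('p) \<le> CARD('n)"
    and lam_pos: "lam > 0"
    and eps_pos: "0 < eps" and eps_lt: "eps < 3/4"
    and f_grad: "\<And>X. (f has_derivative (\<lambda>H. inner (gradf X) H)) (at X)"
    and gradf_deriv: "\<And>X. (gradf has_derivative blinfun_apply (Hf X)) (at X)"
    and Hf_cont: "continuous_on UNIV Hf"
    and L_pos: "L > 0"
    and L_lip: "\<forall>X\<in>stiefel_eps eps. \<forall>Y\<in>stiefel_eps eps.
                  norm (gradf X - gradf Y) \<le> L * norm (X - Y)"
    and mu_ge: "mu \<ge> 2 / (3 - 4 * eps) *
         (L * (1 - eps)
          + 3 * (SUP X\<in>stiefel_eps eps. norm (msym (transpose X ** gradf X)))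
          + (max L (SUP X\<in>stiefel_eps eps. norm (gradf X)))\<^sup>2
              * (1 + eps)\<^sup>2 / (lam * (1 - eps)))"
    and gradL_def: "\<And>X. (meritL f gradf mu has_derivative (\<lambda>H. inner (gradL X) H)) (at X)"
  shows "\<forall>X\<in>stiefel_eps eps.
           inner (Lambda gradf lam X) (gradL X)
             \<ge> min (1/2) ((lam * mu) / (4 * lam\<^sup>2 * (1 + eps))) * (norm (Lambda gradf lam X))\<^sup>2"
proof
  fix X :: "real^'p^'n" assume XS: "X \<in> stiefel_eps eps"
  define s where "s = (SUP Y\<in>(stiefel_eps eps :: (real^'p^'n) set). norm (msym (transpose Y ** gradf Y)))"
  define Lh where "Lh = max L (SUP Y\<in>(stiefel_eps eps :: (real^'p^'n) set). norm (gradf Y))"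
  define G where "G = gradf X"
  define D where "D = transpose X ** X - mat 1"
  define S where "S = msym (transpose X ** G)"
  define A where "A = mskew (G ** transpose X)"
  define R where "R = A ** X"
  define N where "N = X ** D"
  define Lm where "Lm = R + lam *\<^sub>R N"
  define Hf' where "Hf' = blinfun_apply (Hf X)"
  have eps1: "eps < 1" using eps_lt by simp
  have LamEq: "Lambda gradf lam X = Lm"
    unfolding Lambda_def rgrad_def Lm_def R_def A_def G_def N_def D_def by (rule refl)
  have gd: "(gradf has_derivative Hf') (at X)" unfolding Hf'_def by (rule gradf_deriv)
  have val: "\<And>V. inner (gradL X) V = inner G V - inner S (transpose X ** V)
     - 1/2 * inner (transpose X ** Hf' V) D
     - 1/2 * inner (transpose V ** G) D
     + mu * inner D (transpose X ** V)"
    unfolding G_def S_def D_def by (rule gradL_val[OF f_grad gd gradL_def])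
  have core: "inner (gradL X) Lm = (norm A)^2 - 1/2 * inner G (R ** D) - 3/2 * lam * inner S (D ** D)
           - 1/2 * inner (Hf' Lm) N + mu * lam * (norm N)^2"
    using core_identity[where X=X and G=G and Hf'=Hf' and lam=lam and mu=mu and gL="gradL X"] val
    unfolding Lm_def R_def N_def A_def S_def D_def by blast
  have cont_g: "continuous_on (stiefel_eps eps) gradf"
    by (rule continuous_at_imp_continuous_on) (use has_derivative_continuous[OF gradf_deriv] in blast)
  have cont_S: "continuous_on (stiefel_eps eps) (\<lambda>Y. msym (transpose Y ** gradf Y))"
    by (rule bounded_linear.continuous_on[OF bl_msym bounded_bilinear.continuous_on[OF bb_mm bounded_linear.continuous_on[OF bl_tr continuous_on_id] cont_g]])
  have gle: "norm G \<le> Lh"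
  proof -
    have "norm G \<le> (SUP Y\<in>(stiefel_eps eps :: (real^'p^'n) set). norm (gradf Y))" unfolding G_def by (rule sup_bound[OF cont_g XS])
    thus ?thesis unfolding Lh_def by linarith
  qed
  have sle: "norm S \<le> s" unfolding S_def s_def G_def by (rule sup_bound[OF cont_S XS])
  have LLh: "L \<le> Lh" unfolding Lh_def by simp
  have dle: "norm D \<le> eps" using XS unfolding D_def stiefel_eps_def by simp
  have ha: "(norm R)^2 \<le> (1 + norm D) * (norm A)^2" unfolding R_def D_def by (rule norm_R_le)
  have hb: "(1 - norm D) * (norm D)^2 \<le> (norm N)^2" unfolding N_def D_def by (rule norm_N_ge)
  have hH: "norm (Hf' Lm) \<le> L * norm Lm"
    using hess_bound[OF gd lam_pos eps_pos eps1 XS L_lip]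
    unfolding Lm_def R_def N_def A_def G_def D_def .
  have nLm: "norm Lm \<le> norm R + lam * norm N"
    unfolding Lm_def using norm_triangle_ineq[of R "lam *\<^sub>R N"] lam_pos by simp
  have hL: "norm (Hf' Lm) \<le> L * (norm R + lam * norm N)"
  proof -
    have "L * norm Lm \<le> L * (norm R + lam * norm N)" by (rule mult_left_mono[OF nLm]) (use L_pos in simp)
    thus ?thesis using hH by linarith
  qed
  have orth: "inner R N = 0" unfolding R_def N_def A_def D_def by (rule orth_RN)
  have nl: "(norm Lm)^2 = (norm R)^2 + lam^2 * (norm N)^2"
  proof -
    have "orthogonal R (lam *\<^sub>R N)" unfolding orthogonal_def using orth by simp
    hence "(norm Lm)^2 = (norm R)^2 + (norm (lam *\<^sub>R N))^2" unfolding Lm_def by (rule norm_add_Pythagorean)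
    thus ?thesis by (simp add: power_mult_distrib)
  qed
  have i1: "inner G (R ** D) \<le> norm G * norm R * norm D"
  proof -
    have "inner G (R ** D) \<le> norm G * norm (R ** D)" by (rule norm_cauchy_schwarz)
    also have "\<dots> \<le> norm G * (norm R * norm D)" by (rule mult_left_mono[OF norm_mult_le]) simp
    finally show ?thesis by (simp add: mult.assoc)
  qed
  have i2: "inner S (D ** D) \<le> norm S * (norm D)^2"
  proof -
    have "inner S (D ** D) \<le> norm S * norm (D ** D)" by (rule norm_cauchy_schwarz)
    also have "\<dots> \<le> norm S * (norm D * norm D)" by (rule mult_left_mono[OF norm_mult_le]) simp
    finally show ?thesis by (simp add: power2_eq_square)
  qed
  have i3: "inner (Hf' Lm) N \<le> norm (Hf' Lm) * norm N" by (rule norm_cauchy_schwarz)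
  have V: "inner (gradL X) Lm \<ge> (norm A)^2 - 1/2 * norm G * norm R * norm D
       - 3/2 * lam * norm S * (norm D)^2 - 1/2 * norm (Hf' Lm) * norm N + mu * lam * (norm N)^2"
  proof -
    have "3/2 * lam * inner S (D ** D) \<le> 3/2 * lam * (norm S * (norm D)^2)"
      using i2 lam_pos by simp
    thus ?thesis unfolding core using i1 i3 by (simp add: algebra_simps)
  qed
  have mu': "mu \<ge> 2/(3 - 4*eps) * (L*(1-eps) + 3 * s + Lh^2*(1+eps)^2/(lam*(1-eps)))"
    using mu_ge unfolding s_def Lh_def by simp
  have fin: "inner (gradL X) Lm \<ge> min (1/2) ((lam*mu)/(4*lam^2*(1+eps))) * (norm Lm)^2"
    by (rule final_arith[OF lam_pos eps_pos eps_lt L_pos norm_ge_zero dle norm_ge_zero norm_ge_zero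
          ha hb norm_ge_zero gle LLh norm_ge_zero sle norm_ge_zero hL mu' V nl])
  show "inner (Lambda gradf lam X) (gradL X)
             \<ge> min (1/2) ((lam * mu) / (4 * lam\<^sup>2 * (1 + eps))) * (norm (Lambda gradf lam X))\<^sup>2"
    unfolding LamEq using fin by (simp add: inner_commute)
qed

end
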